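(* Let $N\geq2$ and $1<\alpha<N$. There exists a continuous increasing function $\tau_2:[0,\infty)\to[0,\infty)$, depending only on $N$ and $\alpha$, with $\tau_2(0)=0$, such that the following holds. For any Borel sets $G,H,K\subseteq\mathbb R^N$ with $|H|=|K|<\infty$ and any invertible transport map $\Phi$ between $H$ and $K$, \[ \big|\mathfrak I(G,H)-\mathfrak I(G,K)\big|\leq\tau_2(|G|)\int_H 1\wedge|y-\Phi(y)|\,dy\,. \]
   Context: For Borel sets $G,H$, $\mathfrak I(G,H)=\int_G\int_H |y-x|^{-(N-\alpha)}\,dy\,dx$; $a\wedge b=\min\{a,b\}$. For Borel sets $H,K$ of equal finite measure, a transport map between $H$ and $K$ is a Borel map $\Phi:\mathbb R^N\to\mathbb R^N$ such that $\int_K\varphi(z)\,dz=\int_H\varphi(\Phi(y))\,dy$ for every continuous $\varphi\geq0$. It is an invertible transport map if there is a Borel map $\Phi^{-1}:\mathbb R^N\to\mathbb R^N$ that is a transport map between $K$ and $H$, with $\Phi(\Phi^{-1}(z))=z$ for a.e. $z\in K$ and $\Phi^{-1}(\Phi(y))=y$ for a.e. $y\in H$. *)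

theory Defs
  imports "HOL-Analysis.Analysis"
begin

definition riesz_I :: "real \<Rightarrow> 'a::euclidean_space set \<Rightarrow> 'a set \<Rightarrow> real" where
  "riesz_I \<alpha> G H = enn2real (\<integral>\<^sup>+ x. indicator G x *
      (\<integral>\<^sup>+ y. indicator H y * ennreal (norm (y - x) powr (-(real DIM('a) - \<alpha>))) \<partial>lborel) \<partial>lborel)"

definition transport_map :: "('a::euclidean_space \<Rightarrow> 'a) \<Rightarrow> 'a set \<Rightarrow> 'a set \<Rightarrow> bool" where
  "transport_map \<Phi> H K \<longleftrightarrow> \<Phi> \<in> borel_measurable borel \<and>
     (\<forall>\<phi> :: 'a \<Rightarrow> real. continuous_on UNIV \<phi> \<longrightarrow> (\<forall>z. \<phi> z \<ge> 0) \<longrightarrow>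
        (\<integral>\<^sup>+ z. indicator K z * ennreal (\<phi> z) \<partial>lborel)
          = (\<integral>\<^sup>+ y. indicator H y * ennreal (\<phi> (\<Phi> y)) \<partial>lborel))"

definition invertible_transport_map :: "('a::euclidean_space \<Rightarrow> 'a) \<Rightarrow> 'a set \<Rightarrow> 'a set \<Rightarrow> bool" where
  "invertible_transport_map \<Phi> H K \<longleftrightarrow> transport_map \<Phi> H K \<and>
     (\<exists>\<Psi>. transport_map \<Psi> K H \<and>
        (AE z in lborel. z \<in> K \<longrightarrow> \<Phi> (\<Psi> z) = z) \<and>
        (AE y in lborel. y \<in> H \<longrightarrow> \<Psi> (\<Phi> y) = y))"

end

theory Submission
  imports Defs
begin

lemma powr_diff_aux:
  fixes a b \<beta> :: real assumes "0 \<le> a" "a \<le> b" "0 < \<beta>"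
  shows "\<bar>a powr (-\<beta>) - b powr (-\<beta>)\<bar> \<le> (\<beta>+1) * \<bar>a - b\<bar> * (a powr (-\<beta>-1) + b powr (-\<beta>-1))"
proof (cases "a = 0")
  case True
  show ?thesis
  proof (cases "b = 0")
    case True with \<open>a=0\<close> show ?thesis by simp
  next
    case False
    then have bp: "b > 0" using assms by auto
    have "b * b powr (-\<beta>-1) = b powr (-\<beta>)"
    proof -
      have "b powr (-\<beta>) = b powr (1 + (-\<beta>-1))" by simp
      also have "\<dots> = b powr 1 * b powr (-\<beta>-1)" by (rule powr_add)
      finally show ?thesis using bp by simp
    qed
    moreover have "b powr (-\<beta>) \<ge> 0" by simp
    ultimately show ?thesis using True bp assms
      by (simp add: algebra_simps)
  qed
next
  case False
  then have ap: "a > 0" using assms by auto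
  show ?thesis
  proof (cases "a = b")
    case True then show ?thesis by simp
  next
    case False
    then have ab: "a < b" using assms by auto
    have der: "\<And>x. a \<le> x \<Longrightarrow> x \<le> b \<Longrightarrow> DERIV (\<lambda>z. z powr (-\<beta>)) x :> (-\<beta>) * x powr (-\<beta> - 1)"
      using ap by (intro has_real_derivative_powr) auto
    obtain z where z: "a < z" "z < b" "b powr (-\<beta>) - a powr (-\<beta>) = (b - a) * ((-\<beta>) * z powr (-\<beta> - 1))"
      using MVT2[OF ab der] by blast
    have zz: "z powr (-\<beta>-1) \<le> a powr (-\<beta>-1)"
      using z ap assms by (intro powr_mono2') auto
    have "\<bar>a powr (-\<beta>) - b powr (-\<beta>)\<bar> = (b - a) * \<beta> * z powr (-\<beta> - 1)"
    proof -
      have e: "a powr (-\<beta>) - b powr (-\<beta>) = (b - a) * \<beta> * z powr (-\<beta> - 1)"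
        using z(3) by (simp add: algebra_simps)
      have "(b - a) * \<beta> * z powr (-\<beta> - 1) \<ge> 0" using ab assms by simp
      then show ?thesis using e by simp
    qed
    also have "\<dots> \<le> (b - a) * \<beta> * a powr (-\<beta> - 1)"
      using zz ab assms by (intro mult_left_mono) auto
    also have "\<dots> \<le> ((b - a) * (\<beta>+1)) * (a powr (-\<beta>-1) + b powr (-\<beta>-1))"
      using ab assms by (intro mult_mono) auto
    also have "\<dots> = (\<beta>+1) * \<bar>a - b\<bar> * (a powr (-\<beta>-1) + b powr (-\<beta>-1))"
      using ab by (simp add: abs_if)
    finally show ?thesis .
  qed
qed

lemma powr_diff_bound:
  fixes a b \<beta> :: real assumes "0 \<le> a" "0 \<le> b" "0 < \<beta>"
  shows "\<bar>a powr (-\<beta>) - b powr (-\<beta>)\<bar> \<le> (\<beta>+1) * \<bar>a - b\<bar> * (a powr (-\<beta>-1) + b powr (-\<beta>-1))"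
proof (cases "a \<le> b")
  case True then show ?thesis using powr_diff_aux assms by blast
next
  case False then show ?thesis using powr_diff_aux[of b a \<beta>] assms
    by (simp add: abs_minus_commute add.commute)
qed

lemma emeasure_ball_le:
  fixes w :: "'a::euclidean_space" assumes "0 \<le> s"
  shows "emeasure lborel (ball w s) \<le> ennreal ((2 * s) ^ (DIM('a)))"
proof -
  have "ball w s \<subseteq> cbox (w - s *\<^sub>R One) (w + s *\<^sub>R One)"
  proof
    fix x assume "x \<in> ball w s"
    then have n: "norm (x - w) < s" by (simp add: dist_norm norm_minus_commute)
    have "\<forall>b\<in>Basis. \<bar>(x-w)\<bullet>b\<bar> \<le> s" using Basis_le_norm[of _ "x - w"] n by (meson order.trans less_imp_le)
    then show "x \<in> cbox (w - s *\<^sub>R One) (w + s *\<^sub>R One)"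
      by (auto simp: mem_box inner_diff_left inner_add_left abs_le_iff algebra_simps)
  qed
  hence "emeasure lborel (ball w s) \<le> emeasure lborel (cbox (w - s *\<^sub>R One) (w + s *\<^sub>R One))"
    by (intro emeasure_mono) auto
  also have "\<dots> = ennreal (\<Prod>b\<in>(Basis::'a set). (2 * s))"
    using assms by (simp add: emeasure_lborel_cbox_eq inner_diff_left inner_add_left algebra_simps)
  also have "\<dots> = ennreal ((2 * s) ^ (DIM('a)))" by simp
  finally show ?thesis .
qed


definition pot_const :: "nat \<Rightarrow> real \<Rightarrow> real" where
  "pot_const N \<gamma> = 1 + 2 ^ N * 2 powr \<gamma> / (1 - 2 powr (\<gamma> - N))"

lemma pot_const_pos: "\<gamma> < real N \<Longrightarrow> pot_const N \<gamma> > 1"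
proof -
  assume "\<gamma> < real N"
  then have "2 powr (\<gamma> - N) < 1" by (simp add: powr_less_one)
  then show ?thesis unfolding pot_const_def by simp
qed

lemma powr_dyadic:
  fixes r \<gamma> :: real and K :: nat assumes "0 < r"
  shows "(r / 2 ^ Suc K) powr (-\<gamma>) = r powr (-\<gamma>) * 2 powr \<gamma> * (2 powr \<gamma>) ^ K"
proof -
  have e: "(2::real) ^ Suc K = 2 powr (real (Suc K))" by (rule powr_realpow[symmetric]) simp
  have "(r / 2 ^ Suc K) powr (-\<gamma>) = (r / 2 powr (real (Suc K))) powr (-\<gamma>)"
    by (simp only: e)
  also have "\<dots> = r powr (-\<gamma>) / (2 powr (real (Suc K))) powr (-\<gamma>)"
    using assms by (simp add: powr_divide)
  also have "(2 powr (real (Suc K))) powr (-\<gamma>) = 2 powr (- (real (Suc K) * \<gamma>))"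
    by (simp add: powr_powr)
  also have "r powr (-\<gamma>) / 2 powr (- (real (Suc K) * \<gamma>)) = r powr (-\<gamma>) * 2 powr (real (Suc K) * \<gamma>)"
    by (simp add: powr_minus_divide)
  also have "2 powr (real (Suc K) * \<gamma>) = 2 powr \<gamma> * (2 powr \<gamma>) ^ K"
    by (simp add: powr_add[symmetric] powr_realpow[symmetric] powr_powr algebra_simps)
  finally show ?thesis by (simp add: mult.assoc)
qed


lemma pointwise_dyadic:
  fixes w x :: "'a::euclidean_space" and \<gamma> r :: real
  assumes "0 < \<gamma>" "0 < r"
  shows "indicator G x * ennreal (norm (x - w) powr (-\<gamma>))
     \<le> indicator G x * ennreal (r powr (-\<gamma>)) +
        (\<Sum>k. ennreal (r powr (-\<gamma>) * 2 powr \<gamma> * (2 powr \<gamma>) ^ k) * indicator (ball w (r / 2 ^ k)) x)"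
    (is "?L \<le> ?A + ?S")
proof (cases "x \<in> G")
  case False then show ?thesis by simp
next
  case True
  define d where "d = norm (x - w)"
  show ?thesis
  proof (cases "d = 0")
    case True then show ?thesis by (simp add: d_def)
  next
    case False
    then have dp: "d > 0" by (simp add: d_def)
    show ?thesis
    proof (cases "r \<le> d")
      case True
      have "d powr (-\<gamma>) \<le> r powr (-\<gamma>)" using True assms by (intro powr_mono2') auto
      then have "?L \<le> ?A" using \<open>x \<in> G\<close> by (simp add: d_def ennreal_leI)
      then show ?thesis by (simp add: add_increasing2)
    next
      case False
      then have dr: "d < r" by simp
      obtain n where n: "r / d < 2 ^ n" using real_arch_pow[of 2 "r / d"] by auto
      have ex: "r / 2 ^ n \<le> d" using n dp by (simp add: field_simps)
      define L where "L = (LEAST k. r / 2 ^ k \<le> d)"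
      have L1: "r / 2 ^ L \<le> d" unfolding L_def by (rule LeastI[of _ n]) (rule ex)
      have "L \<noteq> 0" using L1 dr by (intro notI) simp
      then obtain K where K: "L = Suc K" using not0_implies_Suc by blast
      have "\<not> r / 2 ^ K \<le> d" unfolding L_def
        using K L_def not_less_Least by (metis lessI)
      then have inb: "x \<in> ball w (r / 2 ^ K)" by (simp add: d_def dist_norm norm_minus_commute)
      have "d powr (-\<gamma>) \<le> (r / 2 ^ Suc K) powr (-\<gamma>)"
        using L1 K assms by (intro powr_mono2') auto
      also have "\<dots> = r powr (-\<gamma>) * 2 powr \<gamma> * (2 powr \<gamma>) ^ K"
        using assms(2) by (rule powr_dyadic)
      finally have "?L \<le> ennreal (r powr (-\<gamma>) * 2 powr \<gamma> * (2 powr \<gamma>) ^ K) * indicator (ball w (r / 2 ^ K)) x"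
        using \<open>x \<in> G\<close> inb by (simp add: d_def ennreal_leI)
      also have "\<dots> \<le> ?S"
      proof -
        let ?f = "\<lambda>k. ennreal (r powr (-\<gamma>) * 2 powr \<gamma> * (2 powr \<gamma>) ^ k) * indicator (ball w (r / 2 ^ k)) x"
        have "sum ?f {K} \<le> suminf ?f" by (intro sum_le_suminf) (auto simp: summableI)
        then show ?thesis by (simp only: sum.insert_if finite.emptyI empty_iff if_False sum.empty add_0_right)
      qed
      also have "\<dots> \<le> ?A + ?S" by (simp add: add_increasing)
      finally show ?thesis .
    qed
  qed
qed


lemma dyadic_term:
  fixes r \<gamma> :: real and N k :: nat assumes "0 < r"
  shows "r powr (-\<gamma>) * 2 powr \<gamma> * (2 powr \<gamma>) ^ k * (2 * (r / 2 ^ k)) ^ N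
       = r powr (real N - \<gamma>) * 2 ^ N * 2 powr \<gamma> * (2 powr (\<gamma> - real N)) ^ k"
proof -
  have q: "2 powr (\<gamma> - real N) = 2 powr \<gamma> / 2 ^ N"
    by (simp add: powr_diff powr_realpow)
  have rN: "r powr (real N - \<gamma>) = r ^ N * r powr (-\<gamma>)"
    using assms by (simp add: powr_diff powr_realpow powr_minus_divide)
  have e: "((2::real) ^ k) ^ N = (2 ^ N) ^ k" by (simp add: power_mult[symmetric] mult.commute)
  show ?thesis unfolding q rN
    using e by (simp add: power_mult_distrib power_divide field_simps)
qed

lemma meas_ball_term:
  "(\<lambda>x::'a::euclidean_space. ennreal c * indicator (ball w s) x) \<in> borel_measurable lborel"
  by (intro borel_measurable_times_ennreal borel_measurable_const borel_measurable_indicator) auto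

lemma potential_bound_r:
  fixes w :: "'a::euclidean_space" and \<gamma> r :: real
  assumes "0 < \<gamma>" "\<gamma> < real DIM('a)" "G \<in> sets lborel" "0 < r"
  shows "(\<integral>\<^sup>+ x. indicator G x * ennreal (norm (x - w) powr (-\<gamma>)) \<partial>lborel)
     \<le> ennreal (r powr (-\<gamma>)) * emeasure lborel G
        + ennreal (r powr (real DIM('a) - \<gamma>) * (pot_const DIM('a) \<gamma> - 1))"
proof -
  define q where "q = 2 powr (\<gamma> - real DIM('a))"
  have q: "0 \<le> q" "q < 1" using assms by (auto simp: q_def powr_less_one)
  define c0 where "c0 = r powr (real DIM('a) - \<gamma>) * 2 ^ DIM('a) * 2 powr \<gamma>"
  have c0: "c0 \<ge> 0" by (simp add: c0_def)
  let ?a = "\<lambda>k. r powr (-\<gamma>) * 2 powr \<gamma> * (2 powr \<gamma>) ^ k"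
  have meas: "\<And>k. (\<lambda>x. ennreal (?a k) * indicator (ball w (r / 2 ^ k)) x) \<in> borel_measurable lborel"
    by (rule meas_ball_term)
  have "(\<integral>\<^sup>+ x. indicator G x * ennreal (norm (x - w) powr (-\<gamma>)) \<partial>lborel)
     \<le> (\<integral>\<^sup>+ x. indicator G x * ennreal (r powr (-\<gamma>)) +
        (\<Sum>k. ennreal (?a k) * indicator (ball w (r / 2 ^ k)) x) \<partial>lborel)"
    by (rule nn_integral_mono, rule pointwise_dyadic[OF assms(1,4)])
  also have "\<dots> = (\<integral>\<^sup>+ x. indicator G x * ennreal (r powr (-\<gamma>)) \<partial>lborel) +
        (\<integral>\<^sup>+ x. (\<Sum>k. ennreal (?a k) * indicator (ball w (r / 2 ^ k)) x) \<partial>lborel)"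
  proof -
    have m1: "(\<lambda>x. indicator G x * ennreal (r powr (-\<gamma>))) \<in> borel_measurable lborel"
      using assms(3) by (intro borel_measurable_times_ennreal borel_measurable_indicator borel_measurable_const) auto
    have m2: "(\<lambda>x. \<Sum>k. ennreal (?a k) * indicator (ball w (r / 2 ^ k)) x) \<in> borel_measurable lborel"
      by (rule borel_measurable_suminf_order[OF meas])
    show ?thesis by (rule nn_integral_add[OF m1 m2])
  qed
  also have "(\<integral>\<^sup>+ x. indicator G x * ennreal (r powr (-\<gamma>)) \<partial>lborel) = ennreal (r powr (-\<gamma>)) * emeasure lborel G"
    using assms nn_integral_cmult_indicator[of G lborel "ennreal (r powr (-\<gamma>))"]
    by (simp add: mult.commute)
  also have "(\<integral>\<^sup>+ x. (\<Sum>k. ennreal (?a k) * indicator (ball w (r / 2 ^ k)) x) \<partial>lborel)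
      = (\<Sum>k. ennreal (?a k) * emeasure lborel (ball w (r / 2 ^ k)))"
  proof -
    have "(\<integral>\<^sup>+ x. (\<Sum>k. ennreal (?a k) * indicator (ball w (r / 2 ^ k)) x) \<partial>lborel)
      = (\<Sum>k. \<integral>\<^sup>+ x. ennreal (?a k) * indicator (ball w (r / 2 ^ k)) x \<partial>lborel)"
      by (rule nn_integral_suminf[OF meas])
    also have "\<dots> = (\<Sum>k. ennreal (?a k) * emeasure lborel (ball w (r / 2 ^ k)))"
      by (intro suminf_cong nn_integral_cmult_indicator) simp
    finally show ?thesis .
  qed
  also have "\<dots> \<le> (\<Sum>k. ennreal (?a k) * ennreal ((2 * (r / 2 ^ k)) ^ DIM('a)))"
    using assms by (intro suminf_le mult_left_mono emeasure_ball_le summableI) auto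
  also have "\<dots> = (\<Sum>k. ennreal (c0 * q ^ k))"
  proof (rule suminf_cong)
    fix k
    have "ennreal (?a k) * ennreal ((2 * (r / 2 ^ k)) ^ DIM('a)) = ennreal (?a k * (2 * (r / 2 ^ k)) ^ DIM('a))"
      using assms by (simp add: ennreal_mult)
    also have "?a k * (2 * (r / 2 ^ k)) ^ DIM('a) = c0 * q ^ k"
      unfolding c0_def q_def by (rule dyadic_term[OF assms(4)])
    finally show "ennreal (?a k) * ennreal ((2 * (r / 2 ^ k)) ^ DIM('a)) = ennreal (c0 * q ^ k)" .
  qed
  also have "\<dots> = ennreal (\<Sum>k. c0 * q ^ k)"
    using q c0 by (intro suminf_ennreal2) (auto intro: summable_mult summable_geometric)
  also have "(\<Sum>k. c0 * q ^ k) = r powr (real DIM('a) - \<gamma>) * (pot_const DIM('a) \<gamma> - 1)"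
    using q by (simp add: suminf_mult[OF summable_geometric] suminf_geometric pot_const_def c0_def q_def)
  finally show ?thesis by simp
qed

lemma potential_bound:
  fixes w :: "'a::euclidean_space" and \<gamma> :: real
  assumes "0 < \<gamma>" "\<gamma> < real DIM('a)" "G \<in> sets lborel" "emeasure lborel G < \<infinity>"
  shows "(\<integral>\<^sup>+ x. indicator G x * ennreal (norm (x - w) powr (-\<gamma>)) \<partial>lborel)
     \<le> ennreal (pot_const DIM('a) \<gamma> * measure lborel G powr ((real DIM('a) - \<gamma>) / real DIM('a)))"
proof -
  define m where "m = measure lborel G"
  have em: "emeasure lborel G = ennreal m"
    using assms(4) unfolding m_def by (intro emeasure_eq_ennreal_measure) auto
  have m0: "m \<ge> 0" by (simp add: m_def)
  show ?thesis
  proof (cases "m = 0")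
    case True
    then have "G \<in> null_sets lborel" using em assms(3) by (simp add: null_sets_def)
    then have "(\<integral>\<^sup>+ x. indicator G x * ennreal (norm (x - w) powr (-\<gamma>)) \<partial>lborel) = 0"
      using nn_integral_null_set[of G lborel "\<lambda>x. ennreal (norm (x - w) powr (-\<gamma>))"] by (simp add: mult.commute)
    then show ?thesis by simp
  next
    case False
    then have mp: "m > 0" using m0 by simp
    define r where "r = m powr (1 / real DIM('a))"
    have rp: "r > 0" using mp by (simp add: r_def)
    have rN: "r powr real DIM('a) = m" using mp by (simp add: r_def powr_powr)
    have e1: "r powr (-\<gamma>) * m = r powr (real DIM('a) - \<gamma>)"
      using rN by (simp add: powr_diff powr_minus_divide)
    have e2: "r powr (real DIM('a) - \<gamma>) = m powr ((real DIM('a) - \<gamma>) / real DIM('a))"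
      using mp by (simp add: r_def powr_powr)
    have C: "pot_const DIM('a) \<gamma> - 1 \<ge> 0" using pot_const_pos[OF assms(2)] by simp
    have "(\<integral>\<^sup>+ x. indicator G x * ennreal (norm (x - w) powr (-\<gamma>)) \<partial>lborel)
     \<le> ennreal (r powr (-\<gamma>)) * emeasure lborel G
        + ennreal (r powr (real DIM('a) - \<gamma>) * (pot_const DIM('a) \<gamma> - 1))"
      by (rule potential_bound_r[OF assms(1-3) rp])
    also have "ennreal (r powr (-\<gamma>)) * emeasure lborel G = ennreal (r powr (real DIM('a) - \<gamma>))"
      unfolding em e1[symmetric] using m0 by (simp add: ennreal_mult)
    also have "ennreal (r powr (real DIM('a) - \<gamma>)) + ennreal (r powr (real DIM('a) - \<gamma>) * (pot_const DIM('a) \<gamma> - 1))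
       = ennreal (r powr (real DIM('a) - \<gamma>) + r powr (real DIM('a) - \<gamma>) * (pot_const DIM('a) \<gamma> - 1))"
      using C by (intro ennreal_plus[symmetric]) auto
    also have "r powr (real DIM('a) - \<gamma>) + r powr (real DIM('a) - \<gamma>) * (pot_const DIM('a) \<gamma> - 1)
       = pot_const DIM('a) \<gamma> * measure lborel G powr ((real DIM('a) - \<gamma>) / real DIM('a))"
      unfolding e2 m_def by (simp add: algebra_simps)
    finally show ?thesis .
  qed
qed

lemma meas_kernel:
  fixes w :: "'a::euclidean_space"
  assumes "G \<in> sets lborel"
  shows "(\<lambda>x. indicator G x * ennreal (norm (x - w) powr c)) \<in> borel_measurable lborel"
  using assms by measurable

definition tau :: "nat \<Rightarrow> real \<Rightarrow> real \<Rightarrow> real" where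
  "tau N \<beta> t = 2 * pot_const N \<beta> * t powr ((real N - \<beta>) / real N)
     + 2 * (\<beta> + 1) * pot_const N (\<beta> + 1) * t powr ((real N - (\<beta> + 1)) / real N)"

lemma diff_bound:
  fixes y z :: "'a::euclidean_space" and \<beta> :: real
  assumes b: "0 < \<beta>" "\<beta> + 1 < real DIM('a)" and G: "G \<in> sets lborel" "emeasure lborel G < \<infinity>"
  shows "(\<integral>\<^sup>+ x. indicator G x * ennreal \<bar>norm (y - x) powr (-\<beta>) - norm (z - x) powr (-\<beta>)\<bar> \<partial>lborel)
     \<le> ennreal (tau DIM('a) \<beta> (measure lborel G) * min 1 (norm (y - z)))"
proof -
  define m where "m = measure lborel G"
  define d where "d = norm (y - z)"
  define A where "A = pot_const DIM('a) \<beta> * m powr ((real DIM('a) - \<beta>) / real DIM('a))"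
  define B where "B = pot_const DIM('a) (\<beta> + 1) * m powr ((real DIM('a) - (\<beta> + 1)) / real DIM('a))"
  have A0: "A \<ge> 0" using pot_const_pos[of \<beta> "DIM('a)"] b by (simp add: A_def)
  have B0: "B \<ge> 0" using pot_const_pos[of "\<beta>+1" "DIM('a)"] b by (simp add: B_def)
  have d0: "d \<ge> 0" by (simp add: d_def)
  have tau: "tau DIM('a) \<beta> m = 2 * A + 2 * (\<beta> + 1) * B" by (simp add: tau_def A_def B_def)
  let ?L = "(\<integral>\<^sup>+ x. indicator G x * ennreal \<bar>norm (y - x) powr (-\<beta>) - norm (z - x) powr (-\<beta>)\<bar> \<partial>lborel)"
  have PA: "(\<integral>\<^sup>+ x. indicator G x * ennreal (norm (x - w) powr (-\<beta>)) \<partial>lborel) \<le> ennreal A" for w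
    unfolding A_def m_def using b G by (intro potential_bound) auto
  have PB: "(\<integral>\<^sup>+ x. indicator G x * ennreal (norm (x - w) powr (-(\<beta>+1))) \<partial>lborel) \<le> ennreal B" for w
    unfolding B_def m_def using b G by (intro potential_bound) auto
  have LA: "?L \<le> ennreal (2 * A)"
  proof -
    have "?L \<le> (\<integral>\<^sup>+ x. indicator G x * ennreal (norm (x - y) powr (-\<beta>)) + indicator G x * ennreal (norm (x - z) powr (-\<beta>)) \<partial>lborel)"
    proof (rule nn_integral_mono)
      fix x
      have "\<bar>norm (y - x) powr (-\<beta>) - norm (z - x) powr (-\<beta>)\<bar> \<le> norm (x - y) powr (-\<beta>) + norm (x - z) powr (-\<beta>)"
        using powr_ge_zero[of "norm (x - y)" "-\<beta>"] powr_ge_zero[of "norm (x - z)" "-\<beta>"]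
        by (simp add: norm_minus_commute abs_le_iff)
      then have "ennreal \<bar>norm (y - x) powr (-\<beta>) - norm (z - x) powr (-\<beta>)\<bar> \<le> ennreal (norm (x - y) powr (-\<beta>)) + ennreal (norm (x - z) powr (-\<beta>))"
        by (simp add: ennreal_plus[symmetric] ennreal_leI del: ennreal_plus)
      then show "indicator G x * ennreal \<bar>norm (y - x) powr (-\<beta>) - norm (z - x) powr (-\<beta>)\<bar> \<le> indicator G x * ennreal (norm (x - y) powr (-\<beta>)) + indicator G x * ennreal (norm (x - z) powr (-\<beta>))"
        by (auto simp: indicator_def)
    qed
    also have "\<dots> = (\<integral>\<^sup>+ x. indicator G x * ennreal (norm (x - y) powr (-\<beta>)) \<partial>lborel) + (\<integral>\<^sup>+ x. indicator G x * ennreal (norm (x - z) powr (-\<beta>)) \<partial>lborel)"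
      using G by (intro nn_integral_add meas_kernel)
    also have "\<dots> \<le> ennreal A + ennreal A" by (intro add_mono PA)
    also have "\<dots> = ennreal (2 * A)" using A0 by (simp add: ennreal_plus[symmetric] del: ennreal_plus)
    finally show ?thesis .
  qed
  have LB: "?L \<le> ennreal (2 * (\<beta> + 1) * B * d)"
  proof -
    have "?L \<le> (\<integral>\<^sup>+ x. ennreal ((\<beta> + 1) * d) * (indicator G x * ennreal (norm (x - y) powr (-(\<beta>+1))) + indicator G x * ennreal (norm (x - z) powr (-(\<beta>+1)))) \<partial>lborel)"
    proof (rule nn_integral_mono)
      fix x
      have tri: "\<bar>norm (x - y) - norm (x - z)\<bar> \<le> d"
        unfolding d_def using norm_triangle_ineq3[of "x - y" "x - z"] by (simp add: norm_minus_commute)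
      have "\<bar>norm (x - y) powr (-\<beta>) - norm (x - z) powr (-\<beta>)\<bar> \<le> (\<beta>+1) * \<bar>norm (x - y) - norm (x - z)\<bar> * (norm (x - y) powr (-\<beta>-1) + norm (x - z) powr (-\<beta>-1))"
        using b by (intro powr_diff_bound) auto
      also have "\<dots> \<le> (\<beta>+1) * d * (norm (x - y) powr (-\<beta>-1) + norm (x - z) powr (-\<beta>-1))"
        using tri b by (intro mult_right_mono mult_left_mono) auto
      also have "-\<beta>-1 = -(\<beta>+1)" by simp
      finally have "\<bar>norm (x - y) powr (-\<beta>) - norm (x - z) powr (-\<beta>)\<bar> \<le> (\<beta>+1) * d * (norm (x - y) powr (-(\<beta>+1)) + norm (x - z) powr (-(\<beta>+1)))" .
      then have "\<bar>norm (y - x) powr (-\<beta>) - norm (z - x) powr (-\<beta>)\<bar> \<le> (\<beta>+1) * d * (norm (x - y) powr (-(\<beta>+1)) + norm (x - z) powr (-(\<beta>+1)))"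
        by (simp only: norm_minus_commute)
      then have "ennreal \<bar>norm (y - x) powr (-\<beta>) - norm (z - x) powr (-\<beta>)\<bar> \<le> ennreal ((\<beta>+1) * d) * (ennreal (norm (x - y) powr (-(\<beta>+1))) + ennreal (norm (x - z) powr (-(\<beta>+1))))"
        using b d0 by (simp add: ennreal_plus[symmetric] ennreal_mult[symmetric] ennreal_leI del: ennreal_plus)
      then show "indicator G x * ennreal \<bar>norm (y - x) powr (-\<beta>) - norm (z - x) powr (-\<beta>)\<bar> \<le> ennreal ((\<beta> + 1) * d) * (indicator G x * ennreal (norm (x - y) powr (-(\<beta>+1))) + indicator G x * ennreal (norm (x - z) powr (-(\<beta>+1))))"
        by (auto simp: indicator_def)
    qed
    also have "\<dots> = ennreal ((\<beta> + 1) * d) * ((\<integral>\<^sup>+ x. indicator G x * ennreal (norm (x - y) powr (-(\<beta>+1))) \<partial>lborel) + (\<integral>\<^sup>+ x. indicator G x * ennreal (norm (x - z) powr (-(\<beta>+1))) \<partial>lborel))"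
      using G by (simp add: nn_integral_cmult nn_integral_add meas_kernel)
    also have "\<dots> \<le> ennreal ((\<beta> + 1) * d) * (ennreal B + ennreal B)" by (intro mult_left_mono add_mono PB) auto
    also have "\<dots> = ennreal (2 * (\<beta> + 1) * B * d)" using B0 b d0
      by (simp add: ennreal_plus[symmetric] ennreal_mult[symmetric] del: ennreal_plus)
    finally show ?thesis .
  qed
  show ?thesis
  proof (cases "d \<le> 1")
    case True
    have "?L \<le> ennreal (2 * (\<beta> + 1) * B * d)" by (rule LB)
    also have "\<dots> \<le> ennreal (tau DIM('a) \<beta> m * d)"
      unfolding tau using A0 B0 d0 b by (intro ennreal_leI) (simp add: algebra_simps)
    finally show ?thesis using True by (simp add: m_def d_def)
  next
    case False
    have "?L \<le> ennreal (2 * A)" by (rule LA)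
    also have "\<dots> \<le> ennreal (tau DIM('a) \<beta> m)"
      unfolding tau using A0 B0 d0 b by (intro ennreal_leI) simp
    finally show ?thesis using False by (simp add: m_def d_def)
  qed
qed

lemma sup_trunc:
  fixes w x :: "'a::euclidean_space" and \<beta> :: real
  assumes "0 < \<beta>" "w \<noteq> x"
  shows "(SUP n. ennreal ((max (norm (w - x)) (1 / real (Suc n))) powr (-\<beta>))) = ennreal (norm (w - x) powr (-\<beta>))"
proof (rule antisym)
  have np: "norm (w - x) > 0" using assms by simp
  show "(SUP n. ennreal ((max (norm (w - x)) (1 / real (Suc n))) powr (-\<beta>))) \<le> ennreal (norm (w - x) powr (-\<beta>))"
  proof (rule SUP_least)
    fix n
    have "(max (norm (w - x)) (1 / real (Suc n))) powr (-\<beta>) \<le> norm (w - x) powr (-\<beta>)"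
      using np assms by (intro powr_mono2') auto
    then show "ennreal ((max (norm (w - x)) (1 / real (Suc n))) powr (-\<beta>)) \<le> ennreal (norm (w - x) powr (-\<beta>))"
      by (rule ennreal_leI)
  qed
  obtain n where n: "n > 0" "inverse (real n) < norm (w - x)" using ex_inverse_of_nat_less[OF np] by auto
  have "1 / real (Suc n) < inverse (real n)" using n(1) by (simp add: field_simps)
  then have "1 / real (Suc n) \<le> norm (w - x)" using n(2) by linarith
  then have "ennreal (norm (w - x) powr (-\<beta>)) = ennreal ((max (norm (w - x)) (1 / real (Suc n))) powr (-\<beta>))"
    by (simp add: max_def)
  also have "\<dots> \<le> (SUP n. ennreal ((max (norm (w - x)) (1 / real (Suc n))) powr (-\<beta>)))"
    by (rule SUP_upper) simp
  finally show "ennreal (norm (w - x) powr (-\<beta>)) \<le> (SUP n. ennreal ((max (norm (w - x)) (1 / real (Suc n))) powr (-\<beta>)))" .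
qed

lemma sup_trunc_ind:
  fixes w x :: "'a::euclidean_space" and \<beta> :: real
  assumes "0 < \<beta>" "w \<noteq> x"
  shows "(SUP n. indicator A y * ennreal ((max (norm (w - x)) (1 / real (Suc n))) powr (-\<beta>))) = indicator A y * ennreal (norm (w - x) powr (-\<beta>))"
  using sup_trunc[OF assms] by (cases "y \<in> A") auto

lemma trunc_inc:
  fixes w :: "'b \<Rightarrow> 'a::euclidean_space" and x :: 'a and \<beta> :: real
  assumes "0 < \<beta>"
  shows "incseq (\<lambda>n y. indicator A y * ennreal ((max (norm (w y - x)) (1 / real (Suc n))) powr (-\<beta>)))"
proof (rule incseq_SucI, rule le_funI)
  fix n y
  have "(max (norm (w y - x)) (1 / real (Suc n))) powr (-\<beta>) \<le> (max (norm (w y - x)) (1 / real (Suc (Suc n)))) powr (-\<beta>)"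
  proof (rule powr_mono2')
    have "1 / real (Suc (Suc n)) \<le> 1 / real (Suc n)" by (simp add: frac_le)
    then show "max (norm (w y - x)) (1 / real (Suc (Suc n))) \<le> max (norm (w y - x)) (1 / real (Suc n))"
      by (rule max.mono[OF order_refl])
    show "0 < max (norm (w y - x)) (1 / real (Suc (Suc n)))" by (simp add: less_max_iff_disj)
  qed (use assms in auto)
  then show "indicator A y * ennreal ((max (norm (w y - x)) (1 / real (Suc n))) powr (-\<beta>))
     \<le> indicator A y * ennreal ((max (norm (w y - x)) (1 / real (Suc (Suc n)))) powr (-\<beta>))"
    by (intro mult_left_mono ennreal_leI) auto
qed

lemma transport_kernel:
  fixes \<Phi> :: "'a::euclidean_space \<Rightarrow> 'a" and \<beta> :: real
  assumes "0 < \<beta>" and T: "invertible_transport_map \<Phi> H K" and HK: "H \<in> sets borel" "K \<in> sets borel"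
  shows "(\<integral>\<^sup>+ z. indicator K z * ennreal (norm (z - x) powr (-\<beta>)) \<partial>lborel)
       = (\<integral>\<^sup>+ y. indicator H y * ennreal (norm (\<Phi> y - x) powr (-\<beta>)) \<partial>lborel)"
proof -
  from T obtain \<Psi> where tr: "transport_map \<Phi> H K" and inv: "AE y in lborel. y \<in> H \<longrightarrow> \<Psi> (\<Phi> y) = y"
    unfolding invertible_transport_map_def by blast
  have Pm: "\<Phi> \<in> borel_measurable borel" and eq: "\<And>\<phi>. continuous_on UNIV \<phi> \<Longrightarrow> (\<forall>z. \<phi> z \<ge> 0) \<Longrightarrow>
        (\<integral>\<^sup>+ z. indicator K z * ennreal (\<phi> z) \<partial>lborel) = (\<integral>\<^sup>+ y. indicator H y * ennreal (\<phi> (\<Phi> y)) \<partial>lborel)"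
    using tr unfolding transport_map_def by blast+
  define h where "h n z = (max (norm (z - x)) (1 / real (Suc n))) powr (-\<beta>)" for n z
  have hc: "continuous_on UNIV (h n)" for n
    unfolding h_def by (intro continuous_on_powr' continuous_intros) (auto simp: max_def)
  have eqn: "(\<integral>\<^sup>+ z. indicator K z * ennreal (h n z) \<partial>lborel) = (\<integral>\<^sup>+ y. indicator H y * ennreal (h n (\<Phi> y)) \<partial>lborel)" for n
    using eq[OF hc] by (simp add: h_def)
  have mK: "(\<lambda>z. indicator K z * ennreal (h n z)) \<in> borel_measurable lborel" for n
    unfolding h_def using HK by measurable
  have mH: "(\<lambda>y. indicator H y * ennreal (h n (\<Phi> y))) \<in> borel_measurable lborel" for n
    unfolding h_def using HK Pm by measurable
  have "(\<integral>\<^sup>+ z. indicator K z * ennreal (norm (z - x) powr (-\<beta>)) \<partial>lborel)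
      = (\<integral>\<^sup>+ z. (SUP n. indicator K z * ennreal (h n z)) \<partial>lborel)"
  proof (rule nn_integral_cong_AE)
    show "AE z in lborel. indicator K z * ennreal (norm (z - x) powr (-\<beta>)) = (SUP n. indicator K z * ennreal (h n z))"
      using AE_lborel_singleton[of x]
    proof eventually_elim
      case (elim z)
      show ?case unfolding h_def using sup_trunc_ind[OF assms(1) elim, where A=K and y=z] by simp
    qed
  qed
  also have "\<dots> = (SUP n. (\<integral>\<^sup>+ z. indicator K z * ennreal (h n z) \<partial>lborel))"
    using trunc_inc[OF assms(1), of K "\<lambda>z. z" x] mK unfolding h_def
    by (intro nn_integral_monotone_convergence_SUP) auto
  also have "\<dots> = (SUP n. (\<integral>\<^sup>+ y. indicator H y * ennreal (h n (\<Phi> y)) \<partial>lborel))"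
    using eqn by simp
  also have "\<dots> = (\<integral>\<^sup>+ y. (SUP n. indicator H y * ennreal (h n (\<Phi> y))) \<partial>lborel)"
    using trunc_inc[OF assms(1), of H \<Phi> x] mH unfolding h_def
    by (intro nn_integral_monotone_convergence_SUP[symmetric]) auto
  also have "\<dots> = (\<integral>\<^sup>+ y. indicator H y * ennreal (norm (\<Phi> y - x) powr (-\<beta>)) \<partial>lborel)"
  proof (rule nn_integral_cong_AE)
    show "AE y in lborel. (SUP n. indicator H y * ennreal (h n (\<Phi> y))) = indicator H y * ennreal (norm (\<Phi> y - x) powr (-\<beta>))"
      using inv AE_lborel_singleton[of "\<Psi> x"]
    proof eventually_elim
      case (elim y)
      show ?case
      proof (cases "y \<in> H")
        case True
        then have "\<Phi> y \<noteq> x" using elim by auto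
        then show ?thesis unfolding h_def using sup_trunc_ind[OF assms(1) \<open>\<Phi> y \<noteq> x\<close>, where A=H and y=y] by simp
      next
        case False then show ?thesis by simp
      qed
    qed
  qed
  finally show ?thesis .
qed

lemma lint_eq:
  fixes g :: "'a::euclidean_space \<Rightarrow> real"
  assumes H: "H \<in> sets borel" "emeasure lborel H < \<infinity>" and g: "g \<in> borel_measurable borel"
    and g01: "\<And>y. 0 \<le> g y" "\<And>y. g y \<le> 1"
  shows "(\<integral>\<^sup>+ y. indicator H y * ennreal (g y) \<partial>lborel) = ennreal (LINT y:H|lborel. g y)"
proof -
  have int: "integrable lborel (\<lambda>y. indicator H y *\<^sub>R g y)"
    using H g g01 by (intro integrableI_bounded_set_indicator[where B=1]) auto
  have "(\<integral>\<^sup>+ y. indicator H y * ennreal (g y) \<partial>lborel) = (\<integral>\<^sup>+ y. ennreal (indicator H y *\<^sub>R g y) \<partial>lborel)"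
    by (intro nn_integral_cong) (auto simp: indicator_def)
  also have "\<dots> = ennreal (integral\<^sup>L lborel (\<lambda>y. indicator H y *\<^sub>R g y))"
    using int g01 by (intro nn_integral_eq_integral) (auto simp: indicator_def)
  finally show ?thesis by (simp add: set_lebesgue_integral_def)
qed

lemma tau_props:
  assumes b: "0 < \<beta>" "\<beta> + 1 < real N"
  shows "continuous_on {0..} (tau N \<beta>)" "strict_mono_on {0..} (tau N \<beta>)"
    "tau N \<beta> ` {0..} \<subseteq> {0..}" "tau N \<beta> 0 = 0" "\<And>t. 0 \<le> t \<Longrightarrow> 0 \<le> tau N \<beta> t"
proof -
  have N: "real N > 0" using b by linarith
  have e1: "(real N - \<beta>) / real N > 0" using b N by (intro divide_pos_pos) auto
  have e2: "(real N - (\<beta> + 1)) / real N > 0" using b N by (intro divide_pos_pos) auto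
  have c1: "pot_const N \<beta> > 1" using b by (intro pot_const_pos) auto
  have c2: "pot_const N (\<beta> + 1) > 1" using b by (intro pot_const_pos) auto
  show "continuous_on {0..} (tau N \<beta>)"
  proof -
    have p1: "continuous_on {0..} (\<lambda>t::real. t powr ((real N - \<beta>) / real N))"
      by (rule continuous_on_powr'[OF continuous_on_id continuous_on_const]) (use e1 in auto)
    have p2: "continuous_on {0..} (\<lambda>t::real. t powr ((real N - (\<beta> + 1)) / real N))"
      by (rule continuous_on_powr'[OF continuous_on_id continuous_on_const]) (use e2 in auto)
    show ?thesis unfolding tau_def[abs_def]
      by (intro continuous_on_add continuous_on_mult[OF continuous_on_const] p1 p2)
  qed
  show "strict_mono_on {0..} (tau N \<beta>)"
  proof (rule strict_mono_onI)
    fix s t :: real assume st: "s \<in> {0..}" "t \<in> {0..}" "s < t"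
    have "s powr ((real N - \<beta>) / real N) < t powr ((real N - \<beta>) / real N)"
      using st e1 by (intro powr_less_mono2) auto
    moreover have "s powr ((real N - (\<beta> + 1)) / real N) < t powr ((real N - (\<beta> + 1)) / real N)"
      using st e2 by (intro powr_less_mono2) auto
    ultimately show "tau N \<beta> s < tau N \<beta> t"
      unfolding tau_def using c1 c2 b
      by (intro add_strict_mono mult_strict_left_mono) auto
  qed
  show nn: "0 \<le> tau N \<beta> t" if "0 \<le> t" for t
    unfolding tau_def using c1 c2 b by (intro add_nonneg_nonneg mult_nonneg_nonneg) auto
  then show "tau N \<beta> ` {0..} \<subseteq> {0..}" by auto
  show "tau N \<beta> 0 = 0" unfolding tau_def using e1 e2 by simp
qed


lemma main_ineq:
  fixes \<alpha> :: real and G H K :: "'a::euclidean_space set" and \<Phi> :: "'a \<Rightarrow> 'a"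
  assumes a: "1 < \<alpha>" "\<alpha> < real DIM('a)"
    and G: "G \<in> sets borel" "emeasure lborel G < \<infinity>"
    and HK: "H \<in> sets borel" "K \<in> sets borel" "emeasure lborel H < \<infinity>"
    and T: "invertible_transport_map \<Phi> H K"
  shows "\<bar>riesz_I \<alpha> G H - riesz_I \<alpha> G K\<bar>
         \<le> tau DIM('a) (real DIM('a) - \<alpha>) (measure lborel G) * (LINT y:H|lborel. min 1 (norm (y - \<Phi> y)))"
proof -
  define \<beta> where "\<beta> = real DIM('a) - \<alpha>"
  have b: "0 < \<beta>" "\<beta> + 1 < real DIM('a)" using a by (auto simp: \<beta>_def)
  have e: "-(real DIM('a) - \<alpha>) = -\<beta>" by (simp add: \<beta>_def)
  have Pm[measurable]: "\<Phi> \<in> borel_measurable borel"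
    using T unfolding invertible_transport_map_def transport_map_def by blast
  note [measurable] = G(1) HK(1,2)
  define A where "A x = (\<integral>\<^sup>+ y. indicator H y * ennreal (norm (y - x) powr (-\<beta>)) \<partial>lborel)" for x
  define B where "B x = (\<integral>\<^sup>+ z. indicator K z * ennreal (norm (z - x) powr (-\<beta>)) \<partial>lborel)" for x
  define B' where "B' x = (\<integral>\<^sup>+ y. indicator H y * ennreal (norm (\<Phi> y - x) powr (-\<beta>)) \<partial>lborel)" for x
  define D where "D x = (\<integral>\<^sup>+ y. indicator H y * ennreal \<bar>norm (y - x) powr (-\<beta>) - norm (\<Phi> y - x) powr (-\<beta>)\<bar> \<partial>lborel)" for x
  define P where "P = (\<integral>\<^sup>+ x. indicator G x * A x \<partial>lborel)"
  define Q where "Q = (\<integral>\<^sup>+ x. indicator G x * B x \<partial>lborel)"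
  define R where "R = (\<integral>\<^sup>+ x. indicator G x * D x \<partial>lborel)"
  define L where "L = (LINT y:H|lborel. min 1 (norm (y - \<Phi> y)))"
  define t where "t = tau DIM('a) \<beta> (measure lborel G)"
  have t0: "t \<ge> 0" unfolding t_def using tau_props(5)[OF b] by simp
  have IH: "riesz_I \<alpha> G H = enn2real P" unfolding riesz_I_def P_def A_def e ..
  have IK: "riesz_I \<alpha> G K = enn2real Q" unfolding riesz_I_def Q_def B_def e ..
  have BB: "B x = B' x" for x unfolding B_def B'_def using b(1) T HK by (intro transport_kernel) auto
  have mA: "(\<lambda>x. indicator G x * A x) \<in> borel_measurable lborel" unfolding A_def by measurable
  have mB: "(\<lambda>x. indicator G x * B x) \<in> borel_measurable lborel" unfolding B_def by measurable
  have mD: "(\<lambda>x. indicator G x * D x) \<in> borel_measurable lborel" unfolding D_def by measurable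
  have AD: "A x \<le> B' x + D x" for x
  proof -
    have "A x \<le> (\<integral>\<^sup>+ y. indicator H y * ennreal (norm (\<Phi> y - x) powr (-\<beta>)) + indicator H y * ennreal \<bar>norm (y - x) powr (-\<beta>) - norm (\<Phi> y - x) powr (-\<beta>)\<bar> \<partial>lborel)"
      unfolding A_def
    proof (rule nn_integral_mono)
      fix y
      have "ennreal (norm (y - x) powr (-\<beta>)) \<le> ennreal (norm (\<Phi> y - x) powr (-\<beta>)) + ennreal \<bar>norm (y - x) powr (-\<beta>) - norm (\<Phi> y - x) powr (-\<beta>)\<bar>"
        by (simp add: ennreal_plus[symmetric] ennreal_leI del: ennreal_plus)
      then show "indicator H y * ennreal (norm (y - x) powr (-\<beta>)) \<le> indicator H y * ennreal (norm (\<Phi> y - x) powr (-\<beta>)) + indicator H y * ennreal \<bar>norm (y - x) powr (-\<beta>) - norm (\<Phi> y - x) powr (-\<beta>)\<bar>"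
        by (auto simp: indicator_def)
    qed
    also have "\<dots> = B' x + D x" unfolding B'_def D_def by (rule nn_integral_add) measurable
    finally show ?thesis .
  qed
  have BD: "B' x \<le> A x + D x" for x
  proof -
    have "B' x \<le> (\<integral>\<^sup>+ y. indicator H y * ennreal (norm (y - x) powr (-\<beta>)) + indicator H y * ennreal \<bar>norm (y - x) powr (-\<beta>) - norm (\<Phi> y - x) powr (-\<beta>)\<bar> \<partial>lborel)"
      unfolding B'_def
    proof (rule nn_integral_mono)
      fix y
      have "ennreal (norm (\<Phi> y - x) powr (-\<beta>)) \<le> ennreal (norm (y - x) powr (-\<beta>)) + ennreal \<bar>norm (y - x) powr (-\<beta>) - norm (\<Phi> y - x) powr (-\<beta>)\<bar>"
        by (simp add: ennreal_plus[symmetric] ennreal_leI del: ennreal_plus)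
      then show "indicator H y * ennreal (norm (\<Phi> y - x) powr (-\<beta>)) \<le> indicator H y * ennreal (norm (y - x) powr (-\<beta>)) + indicator H y * ennreal \<bar>norm (y - x) powr (-\<beta>) - norm (\<Phi> y - x) powr (-\<beta>)\<bar>"
        by (auto simp: indicator_def)
    qed
    also have "\<dots> = A x + D x" unfolding A_def D_def by (rule nn_integral_add) measurable
    finally show ?thesis .
  qed
  have PQR: "P \<le> Q + R"
  proof -
    have "P \<le> (\<integral>\<^sup>+ x. indicator G x * B x + indicator G x * D x \<partial>lborel)"
      unfolding P_def using AD BB by (intro nn_integral_mono) (auto simp: indicator_def)
    also have "\<dots> = Q + R" unfolding Q_def R_def using mB mD by (rule nn_integral_add)
    finally show ?thesis .
  qed
  have QPR: "Q \<le> P + R"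
  proof -
    have "Q \<le> (\<integral>\<^sup>+ x. indicator G x * A x + indicator G x * D x \<partial>lborel)"
      unfolding Q_def using BD BB by (intro nn_integral_mono) (auto simp: indicator_def)
    also have "\<dots> = P + R" unfolding P_def R_def using mA mD by (rule nn_integral_add)
    finally show ?thesis .
  qed
  have Lint: "(\<integral>\<^sup>+ y. indicator H y * ennreal (min 1 (norm (y - \<Phi> y))) \<partial>lborel) = ennreal L"
    unfolding L_def using HK by (intro lint_eq) auto
  have L0: "L \<ge> 0" unfolding L_def set_lebesgue_integral_def by (rule Bochner_Integration.integral_nonneg) (simp add: indicator_def)
  have Rb: "R \<le> ennreal (t * L)"
  proof -
    have "R = (\<integral>\<^sup>+ x. (\<integral>\<^sup>+ y. indicator G x * (indicator H y * ennreal \<bar>norm (y - x) powr (-\<beta>) - norm (\<Phi> y - x) powr (-\<beta>)\<bar>) \<partial>lborel) \<partial>lborel)"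
      unfolding R_def D_def by (intro nn_integral_cong nn_integral_cmult[symmetric]) measurable
    also have "\<dots> = (\<integral>\<^sup>+ y. (\<integral>\<^sup>+ x. indicator G x * (indicator H y * ennreal \<bar>norm (y - x) powr (-\<beta>) - norm (\<Phi> y - x) powr (-\<beta>)\<bar>) \<partial>lborel) \<partial>lborel)"
      by (rule pair_sigma_finite.Fubini'[symmetric]) (unfold_locales, measurable)
    also have "\<dots> = (\<integral>\<^sup>+ y. indicator H y * (\<integral>\<^sup>+ x. indicator G x * ennreal \<bar>norm (y - x) powr (-\<beta>) - norm (\<Phi> y - x) powr (-\<beta>)\<bar> \<partial>lborel) \<partial>lborel)"
      by (intro nn_integral_cong) (simp add: nn_integral_cmult[symmetric] mult_ac)
    also have "\<dots> \<le> (\<integral>\<^sup>+ y. indicator H y * ennreal (t * min 1 (norm (y - \<Phi> y))) \<partial>lborel)"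
      unfolding t_def using b G by (intro nn_integral_mono mult_left_mono diff_bound) auto
    also have "\<dots> = ennreal t * (\<integral>\<^sup>+ y. indicator H y * ennreal (min 1 (norm (y - \<Phi> y))) \<partial>lborel)"
      using t0 by (simp add: nn_integral_cmult[symmetric] ennreal_mult mult_ac)
    also have "\<dots> = ennreal (t * L)" unfolding Lint using t0 L0 by (simp add: ennreal_mult)
    finally show ?thesis .
  qed
  define cH where "cH = pot_const DIM('a) \<beta> * measure lborel H powr ((real DIM('a) - \<beta>) / real DIM('a))"
  have Pfin: "P < \<infinity>"
  proof -
    have "P \<le> (\<integral>\<^sup>+ x. ennreal cH * indicator G x \<partial>lborel)"
      unfolding P_def
    proof (rule nn_integral_mono)
      fix x
      have "A x \<le> ennreal cH" unfolding A_def cH_def using b HK by (intro potential_bound) auto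
      then show "indicator G x * A x \<le> ennreal cH * indicator G x"
        by (auto simp: indicator_def)
    qed
    also have "\<dots> = ennreal cH * emeasure lborel G" using G by (simp add: nn_integral_cmult_indicator)
    also have "\<dots> < \<infinity>" using G by (simp add: ennreal_mult_less_top)
    finally show ?thesis .
  qed
  have Rfin: "R < \<infinity>" using Rb by (simp add: le_less_trans)
  have "P + R < \<infinity>" using Pfin Rfin by simp
  with QPR have Qfin: "Q < \<infinity>" by (rule le_less_trans)
  obtain p where p: "P = ennreal p" "p \<ge> 0" using Pfin by (cases P) auto
  obtain q where q: "Q = ennreal q" "q \<ge> 0" using Qfin by (cases Q) auto
  obtain r where r: "R = ennreal r" "r \<ge> 0" using Rfin by (cases R) auto
  have "p \<le> q + r" using PQR p q r by (simp add: ennreal_plus[symmetric] del: ennreal_plus)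
  moreover have "q \<le> p + r" using QPR p q r by (simp add: ennreal_plus[symmetric] del: ennreal_plus)
  moreover have "r \<le> t * L" using Rb r t0 L0 by simp
  ultimately have "\<bar>p - q\<bar> \<le> t * L" by linarith
  then show ?thesis unfolding IH IK p q t_def L_def \<beta>_def using p q by simp
qed

theorem lemma2p5:
  fixes \<alpha> :: real
  assumes "DIM('a::euclidean_space) \<ge> 2" and "1 < \<alpha>" and "\<alpha> < real DIM('a)"
  shows "\<exists>\<tau>2 :: real \<Rightarrow> real.
    continuous_on {0..} \<tau>2 \<and> strict_mono_on {0..} \<tau>2 \<and> \<tau>2 ` {0..} \<subseteq> {0..} \<and> \<tau>2 0 = 0 \<and>
    (\<forall>(G::'a set) H K \<Phi>.
       G \<in> sets borel \<longrightarrow> H \<in> sets borel \<longrightarrow> K \<in> sets borel \<longrightarrow>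
       emeasure lborel G < \<infinity> \<longrightarrow>
       emeasure lborel H = emeasure lborel K \<longrightarrow> emeasure lborel H < \<infinity> \<longrightarrow>
       invertible_transport_map \<Phi> H K \<longrightarrow>
       \<bar>riesz_I \<alpha> G H - riesz_I \<alpha> G K\<bar>
         \<le> \<tau>2 (measure lborel G) * (LINT y:H|lborel. min 1 (norm (y - \<Phi> y))))"
  proof -
  define \<beta> where "\<beta> = real DIM('a) - \<alpha>"
  have b: "0 < \<beta>" "\<beta> + 1 < real DIM('a)" using assms by (auto simp: \<beta>_def)
  show ?thesis
  proof (intro exI[of _ "tau DIM('a) \<beta>"] conjI allI impI)
    show "continuous_on {0..} (tau DIM('a) \<beta>)" by (rule tau_props(1)[OF b])
    show "strict_mono_on {0..} (tau DIM('a) \<beta>)" by (rule tau_props(2)[OF b])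
    show "tau DIM('a) \<beta> ` {0..} \<subseteq> {0..}" by (rule tau_props(3)[OF b])
    show "tau DIM('a) \<beta> 0 = 0" by (rule tau_props(4)[OF b])
    fix G H K :: "'a set" and \<Phi>
    assume "G \<in> sets borel" "H \<in> sets borel" "K \<in> sets borel" "emeasure lborel G < \<infinity>"
      "emeasure lborel H = emeasure lborel K" "emeasure lborel H < \<infinity>" "invertible_transport_map \<Phi> H K"
    then show "\<bar>riesz_I \<alpha> G H - riesz_I \<alpha> G K\<bar>
         \<le> tau DIM('a) \<beta> (measure lborel G) * (LINT y:H|lborel. min 1 (norm (y - \<Phi> y)))"
      unfolding \<beta>_def using assms by (intro main_ineq) auto
  qed
qed

end
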